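(* Let $\mathcal M=(\mathbf M^{(\lambda)})_{\lambda>0}$, $\mathbf M^{(\lambda)}=(M^{(\lambda)}_p)_{p\in\mathbb N_0}$, be a weight matrix in dimension $d=1$ such that for every $\lambda>0$: $(M^{(\lambda)}_p)^2\le M^{(\lambda)}_{p-1}M^{(\lambda)}_{p+1}$ for all $p\in\mathbb N$ and $\lim_{p\to\infty}(M^{(\lambda)}_p)^{1/p}=+\infty$. Assume moreover that $\mu^{(\lambda)}_p:=M^{(\lambda)}_p/M^{(\lambda)}_{p-1}$ ($p\in\mathbb N$), $\mu^{(\lambda)}_0:=1$, satisfy $\mu^{(\lambda)}_p\le\mu^{(\kappa)}_p$ for all $p$ whenever $0<\lambda\le\kappa$. Then the following are equivalent: (a) for every $j\in\mathbb N$ there exists $\ell\in\mathbb N$, $\ell>j$, such that $\sum_{k=1}^{\infty}e^{\omega_{\mathbf M^{(1/j)}}(jk^{1/2})-\omega_{\mathbf M^{(1/\ell)}}(\ell k^{1/2})}<+\infty$; (b) for every $\lambda>0$ there exist $0<\kappa<\lambda$ and $A\ge1$ such that $M^{(\kappa)}_{p+1}\le A^{p+1}M^{(\lambda)}_p$ for all $p\in\mathbb N$.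
   Context: A weight matrix (here $d=1$) is a family $(\mathbf M^{(\lambda)})_{\lambda>0}$ of sequences of positive reals $(M^{(\lambda)}_p)_{p\in\mathbb N_0}$ with $M^{(\lambda)}_0=1$ and $M^{(\lambda)}_p\le M^{(\kappa)}_p$ for all $p$ whenever $0<\lambda\le\kappa$. The associated function of $\mathbf M=(M_p)$ is $\omega_{\mathbf M}(t)=\sup_{p\in\mathbb N_0}\log\frac{|t|^p}{M_p}$ (with $0^0=1$). *)

theory Defs
  imports "HOL-Analysis.Analysis"
begin

definition weight_matrix :: "(real \<Rightarrow> nat \<Rightarrow> real) \<Rightarrow> bool" where
  "weight_matrix M \<longleftrightarrow>
     (\<forall>la>0. M la 0 = 1 \<and> (\<forall>p. M la p > 0)) \<and>
     (\<forall>la ka. 0 < la \<and> la \<le> ka \<longrightarrow> (\<forall>p. M la p \<le> M ka p))"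

text \<open>Associated function omega_M(t) = sup_p log(|t|^p / M_p), with 0^0 = 1 (so omega_M(0) = 0).\<close>
definition assoc_fun :: "(nat \<Rightarrow> real) \<Rightarrow> real \<Rightarrow> real" where
  "assoc_fun M t = (if t = 0 then 0 else (SUP p. ln (\<bar>t\<bar> ^ p / M p)))"

definition quot_seq :: "(nat \<Rightarrow> real) \<Rightarrow> nat \<Rightarrow> real" where
  "quot_seq M p = (if p = 0 then 1 else M p / M (p - 1))"

end

theory Submission
  imports Defs
begin



lemma bdd_assoc:
  fixes N :: "nat \<Rightarrow> real"
  assumes pos: "\<And>p. N p > 0"
    and lim: "filterlim (\<lambda>p. N p powr (1 / real p)) at_top sequentially"
    and t: "t > 0"
  shows "bdd_above (range (\<lambda>p. ln (t ^ p / N p)))"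
proof -
  have "eventually (\<lambda>p. N p powr (1 / real p) \<ge> t) sequentially"
    using lim by (simp add: filterlim_at_top)
  moreover have "eventually (\<lambda>p. p \<ge> 1) sequentially" by (simp add: eventually_ge_at_top)
  ultimately have "eventually (\<lambda>p. N p powr (1 / real p) \<ge> t \<and> p \<ge> 1) sequentially"
    by (rule eventually_conj)
  then obtain P where P: "\<And>p. p \<ge> P \<Longrightarrow> N p powr (1 / real p) \<ge> t \<and> p \<ge> 1"
    unfolding eventually_sequentially by blast
  define f where "f = (\<lambda>p. ln (t ^ p / N p))"
  have "f p \<le> max (Max (f ` {..P})) 0" for p
  proof (cases "p \<le> P")
    case True
    then show ?thesis by (simp add: le_max_iff_disj)
  next
    case False
    then have h: "N p powr (1 / real p) \<ge> t" "p \<ge> 1" using P by auto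
    have "t ^ p \<le> (N p powr (1 / real p)) ^ p" using h t by (intro power_mono) auto
    also have "\<dots> = N p" using h pos[of p]
      by (simp add: powr_realpow[symmetric] powr_powr)
    finally have "t ^ p / N p \<le> 1" using pos[of p] by simp
    then have "f p \<le> 0" unfolding f_def using pos[of p] t by (simp add: ln_le_zero_iff)
    then show ?thesis by simp
  qed
  then show ?thesis unfolding f_def[symmetric] by (intro bdd_aboveI2) 
qed

lemma assoc_lower:
  assumes "t > 0" "bdd_above (range (\<lambda>p. ln (t ^ p / N p)))"
  shows "ln (t ^ p / N p) \<le> assoc_fun N t"
  using assms unfolding assoc_fun_def by (auto intro: cSUP_upper)

lemma assoc_upper:
  assumes "t > 0" "\<And>p. ln (t ^ p / N p) \<le> c"
  shows "assoc_fun N t \<le> c"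
  using assms unfolding assoc_fun_def by (auto intro: cSUP_least)

lemma assoc_mono_t:
  fixes N :: "nat \<Rightarrow> real"
  assumes pos: "\<And>p. N p > 0" and "0 < s" "s \<le> t" "bdd_above (range (\<lambda>p. ln (t ^ p / N p)))"
  shows "assoc_fun N s \<le> assoc_fun N t"
proof (rule assoc_upper)
  fix p
  have "s ^ p \<le> t ^ p" using assms by (intro power_mono) auto
  then have "s ^ p / N p \<le> t ^ p / N p" using pos[of p] by (intro divide_right_mono) auto
  then have "ln (s ^ p / N p) \<le> ln (t ^ p / N p)"
    using assms pos[of p] by simp
  also have "\<dots> \<le> assoc_fun N t" using assms by (intro assoc_lower) auto
  finally show "ln (s ^ p / N p) \<le> assoc_fun N t" .
qed (use assms in auto)

lemma assoc_mono_N: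
  fixes N K :: "nat \<Rightarrow> real"
  assumes pos: "\<And>p. N p > 0" and le: "\<And>p. N p \<le> K p" and t: "t > 0"
    and b: "bdd_above (range (\<lambda>p. ln (t ^ p / N p)))"
  shows "assoc_fun K t \<le> assoc_fun N t"
proof (rule assoc_upper)
  fix p
  have "ln (t ^ p / K p) \<le> ln (t ^ p / N p)"
    using pos[of p] le[of p] t by (simp add: frac_le)
  also have "\<dots> \<le> assoc_fun N t" using assms by (intro assoc_lower) auto
  finally show "ln (t ^ p / K p) \<le> assoc_fun N t" .
qed (use t in auto)

lemma assoc_nonneg:
  assumes "t > 0" "N 0 = 1" "bdd_above (range (\<lambda>p. ln (t ^ p / N p)))"
  shows "0 \<le> assoc_fun N t"
  using assoc_lower[OF assms(1,3), of 0] assms(2) by simp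



lemma mu_mono_lc:
  fixes N :: "nat \<Rightarrow> real"
  assumes pos: "\<And>p. N p > 0"
    and lc: "\<And>p. p \<ge> 1 \<Longrightarrow> (N p)\<^sup>2 \<le> N (p - 1) * N (p + 1)"
    and ab: "1 \<le> a" "a \<le> b"
  shows "N a / N (a - 1) \<le> N b / N (b - 1)"
  using ab(2)
proof (induction b rule: dec_induct)
  case base then show ?case by simp
next
  case (step n)
  have n1: "n \<ge> 1" using ab step by auto
  have "N n / N (n - 1) \<le> N (n + 1) / N n"
    using lc[OF n1] pos[of n] pos[of "n-1"] pos[of "n+1"]
    by (simp add: divide_simps power2_eq_square mult.commute)
  then show ?case using step by simp
qed

lemma max_at_mu:
  fixes N :: "nat \<Rightarrow> real"
  assumes pos: "\<And>p. N p > 0"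
    and lc: "\<And>p. p \<ge> 1 \<Longrightarrow> (N p)\<^sup>2 \<le> N (p - 1) * N (p + 1)"
    and q: "q \<ge> 1"
  defines "t \<equiv> N q / N (q - 1)"
  shows "t ^ p / N p \<le> t ^ q / N q"
proof -
  have tpos: "t > 0" unfolding t_def using pos by simp
  have stp: "t ^ p / N p \<le> t ^ (p+1) / N (p+1) \<longleftrightarrow> N (p+1) / N p \<le> t" for p
    using pos[of p] pos[of "p+1"] tpos by (simp add: divide_simps mult.commute)
  show ?thesis
  proof (cases "p \<le> q")
    case True
    then show ?thesis
    proof (induction p rule: inc_induct)
      case base then show ?case by simp
    next
      case (step n)
      have "N (n+1) / N n \<le> t" unfolding t_def
        using mu_mono_lc[OF pos lc, of "n+1" q] step by simp
      then show ?case using step.IH stp[of n] by (simp del: power_Suc)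
    qed
  next
    case False
    then have "q \<le> p" by simp
    then show ?thesis
    proof (induction p rule: dec_induct)
      case base then show ?case by simp
    next
      case (step n)
      have "t \<le> N (n+1) / N n" unfolding t_def
        using mu_mono_lc[OF pos lc, of q "n+1"] step q by simp
      then have "t ^ (n+1) / N (n+1) \<le> t ^ n / N n"
        using pos[of n] pos[of "n+1"] tpos by (simp add: divide_simps mult.commute)
      then show ?case using step.IH by simp
    qed
  qed
qed

lemma shift_ineq:
  fixes N K :: "nat \<Rightarrow> real"
  assumes Npos: "\<And>p. N p > 0" and Kpos: "\<And>p. K p > 0"
    and bK: "bdd_above (range (\<lambda>p. ln ((A*t) ^ p / K p)))"
    and sh: "\<And>p. K (p+1) \<le> A^(p+1) * N p" and A: "A > 0" and t: "t > 0"
  shows "assoc_fun N t + ln t \<le> assoc_fun K (A*t)"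
proof -
  have "assoc_fun N t \<le> assoc_fun K (A*t) - ln t"
  proof (rule assoc_upper[OF t])
    fix p
    have "t ^ (p+1) / N p \<le> (A*t) ^ (p+1) / K (p+1)"
      using sh[of p] Npos[of p] Kpos[of "p+1"] t A
      by (simp add: divide_simps power_mult_distrib mult.commute mult.left_commute)
    then have "ln (t ^ (p+1) / N p) \<le> ln ((A*t) ^ (p+1) / K (p+1))"
      using Npos[of p] Kpos[of "p+1"] t A by simp
    also have "\<dots> \<le> assoc_fun K (A*t)" using bK A t by (intro assoc_lower) auto
    finally have "ln (t ^ (p+1) / N p) \<le> assoc_fun K (A*t)" .
    moreover have "ln (t ^ (p+1) / N p) = ln (t ^ p / N p) + ln t"
      using Npos[of p] t by (simp add: ln_div ln_mult)
    ultimately show "ln (t ^ p / N p) \<le> assoc_fun K (A*t) - ln t" by simp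
  qed
  then show ?thesis by simp
qed



lemma bdd_M:
  assumes wm: "weight_matrix M"
    and lim: "\<And>la. la > 0 \<Longrightarrow> filterlim (\<lambda>p. M la p powr (1 / real p)) at_top sequentially"
    and la: "la > 0" and t: "t > 0"
  shows "bdd_above (range (\<lambda>p. ln (t ^ p / M la p)))"
  using wm la by (intro bdd_assoc[OF _ lim[OF la] t]) (auto simp: weight_matrix_def)

lemma b_all:
  assumes wm: "weight_matrix M"
    and b: "\<forall>la::real. la > 0 \<longrightarrow> (\<exists>ka A. 0 < ka \<and> ka < la \<and> A \<ge> 1 \<and>
            (\<forall>p::nat. p \<ge> 1 \<longrightarrow> M ka (p + 1) \<le> A ^ (p + 1) * M la p))"
    and la: "la > 0"
  shows "\<exists>ka A. 0 < ka \<and> ka < la \<and> A \<ge> 1 \<and> (\<forall>p. M ka (p + 1) \<le> A ^ (p + 1) * M la p)"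
proof -
  obtain ka A where k: "0 < ka" "ka < la" "A \<ge> 1" "\<forall>p. p \<ge> 1 \<longrightarrow> M ka (p + 1) \<le> A ^ (p + 1) * M la p"
    using b la by blast
  define A' where "A' = max A (M ka 1)"
  have "M ka (p + 1) \<le> A' ^ (p + 1) * M la p" for p
  proof (cases "p = 0")
    case True
    then show ?thesis using wm la unfolding weight_matrix_def A'_def by simp
  next
    case False
    then have "M ka (p + 1) \<le> A ^ (p + 1) * M la p" using k by simp
    also have "\<dots> \<le> A' ^ (p + 1) * M la p"
      using wm la k unfolding weight_matrix_def A'_def
      by (intro mult_right_mono power_mono) (auto simp: less_imp_le)
    finally show ?thesis .
  qed
  moreover have "A' \<ge> 1" using k unfolding A'_def by simp
  ultimately show ?thesis using k by blast
qed

lemma iter: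
  assumes wm: "weight_matrix M"
    and lim: "\<And>la. la > 0 \<Longrightarrow> filterlim (\<lambda>p. M la p powr (1 / real p)) at_top sequentially"
    and b: "\<forall>la::real. la > 0 \<longrightarrow> (\<exists>ka A. 0 < ka \<and> ka < la \<and> A \<ge> 1 \<and>
            (\<forall>p::nat. p \<ge> 1 \<longrightarrow> M ka (p + 1) \<le> A ^ (p + 1) * M la p))"
  shows "la > 0 \<Longrightarrow> \<exists>ka B c. 0 < ka \<and> ka < la \<and> B \<ge> 1 \<and>
     (\<forall>t>0. assoc_fun (M la) t + real n * ln t \<le> assoc_fun (M ka) (B * t) + c)"
proof (induction n)
  case 0
  have h0: "assoc_fun (M la) t \<le> assoc_fun (M (la/2)) t" if "t > 0" for t
    using wm 0 that unfolding weight_matrix_def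
    by (intro assoc_mono_N bdd_M[OF wm lim]) auto
  show ?case
    apply (rule exI[of _ "la/2"], rule exI[of _ "1::real"], rule exI[of _ "0::real"])
    using 0 h0 by auto
next
  case (Suc n)
  then obtain ka B c where k: "0 < ka" "ka < la" "B \<ge> 1"
    "\<forall>t>0. assoc_fun (M la) t + real n * ln t \<le> assoc_fun (M ka) (B * t) + c" by blast
  obtain kb A where kb: "0 < kb" "kb < ka" "A \<ge> 1" "\<forall>p. M kb (p + 1) \<le> A ^ (p + 1) * M ka p"
    using b_all[OF wm b k(1)] by blast
  have h1: "assoc_fun (M la) t + real (Suc n) * ln t \<le> assoc_fun (M kb) ((A * B) * t) + (c - ln B)"
    if t: "t > 0" for t
  proof -
    have Bt: "B * t > 0" using t k by simp
    have "assoc_fun (M ka) (B * t) + ln (B * t) \<le> assoc_fun (M kb) (A * (B * t))"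
      using wm k kb t Bt unfolding weight_matrix_def
      by (intro shift_ineq bdd_M[OF wm lim]) auto
    moreover have "ln (B * t) = ln B + ln t" using k t by (simp add: ln_mult)
    moreover note k(4)[rule_format, OF t]
    ultimately show ?thesis by (simp add: algebra_simps)
  qed
  show ?case
    apply (rule exI[of _ kb], rule exI[of _ "A*B"], rule exI[of _ "c - ln B"])
    using kb k h1 mult_mono[of 1 A 1 B] by auto
qed



lemma b_to_a:
  assumes wm: "weight_matrix M"
    and lim: "\<And>la. la > 0 \<Longrightarrow> filterlim (\<lambda>p. M la p powr (1 / real p)) at_top sequentially"
    and b: "\<forall>la::real. la > 0 \<longrightarrow> (\<exists>ka A. 0 < ka \<and> ka < la \<and> A \<ge> 1 \<and>
            (\<forall>p::nat. p \<ge> 1 \<longrightarrow> M ka (p + 1) \<le> A ^ (p + 1) * M la p))"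
    and j: "(j::nat) \<ge> 1"
  shows "\<exists>l::nat. l > j \<and>
            summable (\<lambda>k::nat. exp (assoc_fun (M (1 / real j)) (real j * sqrt (real (k + 1)))
                                   - assoc_fun (M (1 / real l)) (real l * sqrt (real (k + 1)))))"
proof -
  have jpos: "(1 / real j) > 0" using j by simp
  obtain ka B c where k: "0 < ka" "ka < 1 / real j" "B \<ge> 1"
    "\<forall>t>0. assoc_fun (M (1 / real j)) t + real 3 * ln t \<le> assoc_fun (M ka) (B * t) + c"
    using iter[OF wm lim b jpos, of 3] by blast
  define l where "l = nat \<lceil>max (1/ka) (B * real j)\<rceil> + j + 1"
  have l1: "real l \<ge> 1/ka" "real l \<ge> B * real j" "l > j"
    unfolding l_def by linarith+
  have lpos: "real l > 0" using l1 by simp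
  have lka: "1 / real l \<le> ka" using l1(1) k(1) lpos
    by (simp add: divide_simps mult.commute)
  have bound: "exp (assoc_fun (M (1 / real j)) (real j * sqrt (real (k + 1)))
        - assoc_fun (M (1 / real l)) (real l * sqrt (real (k + 1))))
        \<le> exp c * real (Suc k) powr (-3/2)" for k
  proof -
    define s where "s = sqrt (real (k + 1))"
    have s1: "s \<ge> 1" unfolding s_def by simp
    define t where "t = real j * s"
    have tpos: "t > 0" unfolding t_def using s1 j by simp
    have lnt: "ln t \<ge> ln s" unfolding t_def using s1 j by (simp add: ln_mult)
    have "assoc_fun (M ka) (B * t) \<le> assoc_fun (M ka) (real l * s)"
      using k(1,3) tpos l1 s1 mult_pos_pos[of B "real j * s"] unfolding t_def
      by (intro assoc_mono_t bdd_M[OF wm lim]) (auto simp: weight_matrix_def wm[unfolded weight_matrix_def] mult.assoc[symmetric] intro!: mult_right_mono)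
    also have "\<dots> \<le> assoc_fun (M (1 / real l)) (real l * s)"
      using k(1) lka lpos s1 wm[unfolded weight_matrix_def]
      by (intro assoc_mono_N bdd_M[OF wm lim]) auto
    finally have "assoc_fun (M (1 / real j)) t - assoc_fun (M (1 / real l)) (real l * s) \<le> c - 3 * ln s"
      using k(4)[rule_format, OF tpos] lnt by simp
    then have "exp (assoc_fun (M (1 / real j)) t - assoc_fun (M (1 / real l)) (real l * s)) \<le> exp (c - 3 * ln s)"
      by simp
    also have "exp (c - 3 * ln s) = exp c * s powr (-3)"
      using s1 by (simp add: powr_def exp_diff exp_minus field_simps)
    also have "s powr (-3) = real (Suc k) powr (-3/2)"
      unfolding s_def by (simp add: powr_half_sqrt[symmetric] powr_powr)
    finally show ?thesis unfolding s_def t_def by simp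
  qed
  have "summable (\<lambda>k. real k powr (-3/2))" by (simp add: summable_real_powr_iff)
  then have "summable (\<lambda>k. real (Suc k) powr (-3/2))" by (subst summable_Suc_iff)
  then have sg: "summable (\<lambda>k. exp c * real (Suc k) powr (-3/2))" by (rule summable_mult)
  show ?thesis
    apply (rule exI[of _ l])
    using l1(3) bound by (auto intro!: summable_comparison_test[OF _ sg])
qed



lemma a_to_b:
  assumes wm: "weight_matrix M"
    and lc: "\<And>la p. la > 0 \<Longrightarrow> p \<ge> 1 \<Longrightarrow> (M la p)\<^sup>2 \<le> M la (p - 1) * M la (p + 1)"
    and lim: "\<And>la. la > 0 \<Longrightarrow> filterlim (\<lambda>p. M la p powr (1 / real p)) at_top sequentially"
    and a: "\<forall>j::nat. j \<ge> 1 \<longrightarrow> (\<exists>l::nat. l > j \<and>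
            summable (\<lambda>k::nat. exp (assoc_fun (M (1 / real j)) (real j * sqrt (real (k + 1)))
                                   - assoc_fun (M (1 / real l)) (real l * sqrt (real (k + 1))))))"
    and la: "la > 0"
  shows "\<exists>ka A. 0 < ka \<and> ka < la \<and> A \<ge> 1 \<and>
            (\<forall>p::nat. p \<ge> 1 \<longrightarrow> M ka (p + 1) \<le> A ^ (p + 1) * M la p)"
proof -
  define j where "j = nat \<lceil>1/la\<rceil> + 1"
  have j1: "j \<ge> 1" "real j \<ge> 1/la" unfolding j_def by linarith+
  have jla: "1 / real j \<le> la" using j1 la by (simp add: divide_simps mult.commute)
  obtain l where l: "l > j" and sf: "summable (\<lambda>k::nat. exp (assoc_fun (M (1 / real j)) (real j * sqrt (real (k + 1)))
                                   - assoc_fun (M (1 / real l)) (real l * sqrt (real (k + 1)))))"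
    using a j1 by blast
  define f where "f = (\<lambda>k::nat. exp (assoc_fun (M (1 / real j)) (real j * sqrt (real (k + 1)))
                                   - assoc_fun (M (1 / real l)) (real l * sqrt (real (k + 1)))))"
  define Mj where "Mj = M (1 / real j)"
  define Nl where "Nl = M (1 / real l)"
  have jp: "1 / real j > 0" using j1 by simp
  have lp: "1 / real l > 0" using l by simp
  have Mjpos: "\<And>p. Mj p > 0" and Mj0: "Mj 0 = 1" using wm jp unfolding Mj_def weight_matrix_def by auto
  have Nlpos: "\<And>p. Nl p > 0" and Nl0: "Nl 0 = 1" using wm lp unfolding Nl_def weight_matrix_def by auto
  have bj: "\<And>t. t > 0 \<Longrightarrow> bdd_above (range (\<lambda>p. ln (t ^ p / Mj p)))"
    unfolding Mj_def using jp by (intro bdd_M[OF wm lim]) auto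
  have bl: "\<And>t. t > 0 \<Longrightarrow> bdd_above (range (\<lambda>p. ln (t ^ p / Nl p)))"
    unfolding Nl_def using lp by (intro bdd_M[OF wm lim]) auto
  have sf': "summable f" using sf unfolding f_def .
  have fpos: "\<And>k. f k > 0" unfolding f_def by simp
  define S where "S = suminf f"
  have Spos: "S > 0" unfolding S_def using sf' fpos by (intro suminf_pos) auto
  define e where "e = (\<lambda>n::nat. exp (assoc_fun Mj (real j * sqrt (real n)) - assoc_fun Nl (real l * sqrt (2 * real n))))"
  have step1: "real n * e n \<le> S" if n: "n \<ge> 1" for n
  proof -
    have "e n \<le> f k" if k: "k \<in> {n-1..<2*n-1}" for k
    proof -
      have k1: "real n \<le> real (k+1)" "real (k+1) \<le> 2 * real n" using k n by auto
      have "assoc_fun Mj (real j * sqrt (real n)) \<le> assoc_fun Mj (real j * sqrt (real (k+1)))"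
        using k1 n j1 by (intro assoc_mono_t Mjpos bj) auto
      moreover have "assoc_fun Nl (real l * sqrt (real (k+1))) \<le> assoc_fun Nl (real l * sqrt (2 * real n))"
        using k1 n l by (intro assoc_mono_t Nlpos bl) auto
      ultimately show ?thesis unfolding e_def f_def Mj_def Nl_def by simp
    qed
    then have "(\<Sum>k\<in>{n-1..<2*n-1}. e n) \<le> (\<Sum>k\<in>{n-1..<2*n-1}. f k)" by (rule sum_mono)
    also have "\<dots> \<le> S" unfolding S_def using sf' fpos by (intro sum_le_suminf) (auto intro: less_imp_le)
    finally show ?thesis using n by simp
  qed
  define H where "H = 2 * real l / real j"
  have H1: "H \<ge> 1" unfolding H_def using l j1 by (simp add: divide_simps)
  define C1 where "C1 = ln S + 2 * ln (real j)"
  have step2: "assoc_fun Mj s + ln s \<le> assoc_fun Nl (H * s) + C1" if s: "s \<ge> real j" for s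
  proof -
    define r where "r = s / real j"
    have r1: "r \<ge> 1" unfolding r_def using s j1 by simp
    define m where "m = nat \<lceil>r^2\<rceil>"
    have r2: "r^2 \<ge> 1" using r1 by simp
    have "real m = real_of_int \<lceil>r^2\<rceil>" unfolding m_def using r2 by simp
    then have m1: "real m \<ge> r^2" "real m < r^2 + 1" by linarith+
    have mpos: "m \<ge> 1" using m1 r2 by linarith
    have spos: "s > 0" using s j1 by simp
    have sm: "s \<le> real j * sqrt (real m)"
    proof -
      have "r \<le> sqrt (real m)" using m1 r1 real_le_rsqrt by blast
      then show ?thesis unfolding r_def using j1 by (simp add: divide_simps mult.commute)
    qed
    have lm: "real l * sqrt (2 * real m) \<le> H * s"
    proof -
      have "sqrt (2 * real m) \<le> sqrt ((2*r)^2)" using m1 r2 by (intro real_sqrt_le_mono) (simp add: power2_eq_square)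
      also have "\<dots> = 2 * r" using r1 by (intro real_sqrt_unique) auto
      finally have "real l * sqrt (2 * real m) \<le> real l * (2 * r)" by (intro mult_left_mono) auto
      also have "real l * (2 * r) = H * s" unfolding H_def r_def by simp
      finally show ?thesis .
    qed
    have e1: "real m * e m \<le> S" using step1 mpos by simp
    have "ln (real m * e m) \<le> ln S" using e1 mpos Spos unfolding e_def by simp
    then have e2: "ln (real m) + assoc_fun Mj (real j * sqrt (real m)) - assoc_fun Nl (real l * sqrt (2 * real m)) \<le> ln S"
      using mpos unfolding e_def by (simp add: ln_mult)
    have "assoc_fun Mj s \<le> assoc_fun Mj (real j * sqrt (real m))"
      using sm spos by (intro assoc_mono_t Mjpos bj) auto
    moreover have "assoc_fun Nl (real l * sqrt (2 * real m)) \<le> assoc_fun Nl (H * s)"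
      using lm mpos l H1 spos by (intro assoc_mono_t Nlpos bl) auto
    moreover have "ln (real m) \<ge> 2 * ln s - 2 * ln (real j)"
    proof -
      have "ln (r^2) \<le> ln (real m)" using m1 r2 by (subst ln_le_cancel_iff) auto
      moreover have "ln (r^2) = 2 * ln s - 2 * ln (real j)" unfolding r_def using spos j1
        by (simp add: ln_div ln_realpow)
      ultimately show ?thesis by simp
    qed
    moreover have "ln s \<ge> 0" using s j1 by simp
    ultimately show ?thesis using e2 unfolding C1_def by linarith
  qed
  define C where "C = max C1 (assoc_fun Mj (real j) + ln (real j))"
  have step3: "assoc_fun Mj s + ln s \<le> assoc_fun Nl (H * s) + C" if s: "s > 0" for s
  proof (cases "s \<ge> real j")
    case True
    then show ?thesis using step2[OF True] unfolding C_def by linarith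
  next
    case False
    have "assoc_fun Mj s \<le> assoc_fun Mj (real j)" using False s by (intro assoc_mono_t Mjpos bj) auto
    moreover have "ln s \<le> ln (real j)" using False s by simp
    moreover have "0 \<le> assoc_fun Nl (H * s)" using s H1 by (intro assoc_nonneg Nl0 bl) auto
    ultimately show ?thesis unfolding C_def by linarith
  qed
  have step4: "Nl q \<le> exp C * H ^ q * Mj (q - 1)" if q: "q \<ge> 1" for q
  proof -
    define t where "t = Nl q / Nl (q - 1)"
    have tpos: "t > 0" unfolding t_def using Nlpos by simp
    have up: "assoc_fun Nl t \<le> ln (t ^ q / Nl q)"
    proof (rule assoc_upper[OF tpos])
      fix p
      have "t ^ p / Nl p \<le> t ^ q / Nl q" unfolding t_def
        using Nlpos q lc[of "1 / real l"] lp unfolding Nl_def by (intro max_at_mu) auto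
      then show "ln (t ^ p / Nl p) \<le> ln (t ^ q / Nl q)" using tpos Nlpos[of p] Nlpos[of q] by (subst ln_le_cancel_iff) auto
    qed
    define s where "s = t / H"
    have spos: "s > 0" unfolding s_def using tpos H1 by simp
    have Hs: "H * s = t" unfolding s_def using H1 by simp
    have "ln (s ^ (q-1) / Mj (q-1)) + ln s - C \<le> ln (t ^ q / Nl q)"
      using assoc_lower[OF spos bj[OF spos], of "q-1"] step3[OF spos] up unfolding Hs by linarith
    moreover have "ln (s ^ (q-1) / Mj (q-1)) + ln s - C = ln (s ^ q / (Mj (q-1) * exp C))"
    proof -
      have "s ^ q = s ^ (q-1) * s" using q by (metis Suc_diff_le diff_Suc_1 power_Suc2)
      then show ?thesis using spos Mjpos[of "q-1"] by (simp add: ln_div ln_mult)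
    qed
    ultimately have "ln (s ^ q / (Mj (q-1) * exp C)) \<le> ln (t ^ q / Nl q)" by simp
    then have "s ^ q / (Mj (q-1) * exp C) \<le> t ^ q / Nl q"
      using spos tpos Mjpos[of "q-1"] Nlpos[of q] by simp
    then have "s ^ q * Nl q \<le> t ^ q * (Mj (q-1) * exp C)"
      using spos tpos Mjpos[of "q-1"] Nlpos[of q] by (simp add: divide_simps)
    then have "Nl q * s ^ q \<le> t ^ q * (Mj (q-1) * exp C)" by (simp only: mult.commute)
    also have "t ^ q = H ^ q * s ^ q" using Hs by (metis power_mult_distrib)
    finally have "Nl q * s ^ q \<le> (exp C * H ^ q * Mj (q - 1)) * s ^ q" by (simp add: algebra_simps)
    then show ?thesis using spos by simp
  qed
  define A where "A = max 1 (exp C) * H"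
  have A1: "A \<ge> 1" unfolding A_def using H1 mult_mono[of 1 "max 1 (exp C)" 1 H] by simp
  have "M (1 / real l) (p + 1) \<le> A ^ (p + 1) * M la p" for p
  proof -
    have "M (1 / real l) (p + 1) = Nl (p+1)" unfolding Nl_def ..
    also have "\<dots> \<le> exp C * H ^ (p+1) * Mj p" using step4[of "p+1"] by simp
    also have "\<dots> \<le> A ^ (p+1) * Mj p"
    proof -
      have "exp C \<le> max 1 (exp C) ^ (p+1)"
        using power_increasing[of 1 "p+1" "max 1 (exp C)"] by simp
      then have "exp C * H ^ (p+1) \<le> A ^ (p+1)" unfolding A_def power_mult_distrib
        using H1 by (intro mult_right_mono) auto
      then show ?thesis using Mjpos[of p] by (intro mult_right_mono) auto
    qed
    also have "\<dots> \<le> A ^ (p+1) * M la p"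
      using wm jp jla A1 unfolding Mj_def weight_matrix_def by (intro mult_left_mono) auto
    finally show ?thesis .
  qed
  moreover have "1 / real l < 1 / real j" using l j1 by (intro frac_less2) auto
  then have "1 / real l < la" using jla by linarith
  ultimately show ?thesis using lp A1 by blast
qed

theorem proposition5p6:
  fixes M :: "real \<Rightarrow> nat \<Rightarrow> real"
  assumes wm: "weight_matrix M"
    and lc: "\<And>la p. la > 0 \<Longrightarrow> p \<ge> 1 \<Longrightarrow> (M la p)\<^sup>2 \<le> M la (p - 1) * M la (p + 1)"
    and lim: "\<And>la. la > 0 \<Longrightarrow> filterlim (\<lambda>p. M la p powr (1 / real p)) at_top sequentially"
    and mu_mono: "\<And>la ka p. 0 < la \<Longrightarrow> la \<le> ka \<Longrightarrow> quot_seq (M la) p \<le> quot_seq (M ka) p"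
  shows "(\<forall>j::nat. j \<ge> 1 \<longrightarrow> (\<exists>l::nat. l > j \<and>
            summable (\<lambda>k::nat. exp (assoc_fun (M (1 / real j)) (real j * sqrt (real (k + 1)))
                                   - assoc_fun (M (1 / real l)) (real l * sqrt (real (k + 1)))))))
     \<longleftrightarrow> (\<forall>la::real. la > 0 \<longrightarrow> (\<exists>ka A. 0 < ka \<and> ka < la \<and> A \<ge> 1 \<and>
            (\<forall>p::nat. p \<ge> 1 \<longrightarrow> M ka (p + 1) \<le> A ^ (p + 1) * M la p)))"
proof
  assume a: "\<forall>j::nat. j \<ge> 1 \<longrightarrow> (\<exists>l::nat. l > j \<and>
            summable (\<lambda>k::nat. exp (assoc_fun (M (1 / real j)) (real j * sqrt (real (k + 1)))
                                   - assoc_fun (M (1 / real l)) (real l * sqrt (real (k + 1))))))"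
  show "\<forall>la::real. la > 0 \<longrightarrow> (\<exists>ka A. 0 < ka \<and> ka < la \<and> A \<ge> 1 \<and>
            (\<forall>p::nat. p \<ge> 1 \<longrightarrow> M ka (p + 1) \<le> A ^ (p + 1) * M la p))"
    using a_to_b[OF wm lc lim a] by blast
next
  assume b: "\<forall>la::real. la > 0 \<longrightarrow> (\<exists>ka A. 0 < ka \<and> ka < la \<and> A \<ge> 1 \<and>
            (\<forall>p::nat. p \<ge> 1 \<longrightarrow> M ka (p + 1) \<le> A ^ (p + 1) * M la p))"
  show "\<forall>j::nat. j \<ge> 1 \<longrightarrow> (\<exists>l::nat. l > j \<and>
            summable (\<lambda>k::nat. exp (assoc_fun (M (1 / real j)) (real j * sqrt (real (k + 1)))
                                   - assoc_fun (M (1 / real l)) (real l * sqrt (real (k + 1))))))"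
    using b_to_a[OF wm lim b] by blast
qed

end
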